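(* Let $f:\mathbb{R}\to\mathbb{R}\cup\{\pm\infty\}$ be a proper concave function such that $f(\delta)\le0$ and $\partial f(\delta)\cap\mathbb{R}_{<0}\ne\emptyset$ for some $\delta\in\operatorname{dom}(f)$, and such that $f$ has a root or attains its maximum; let $\delta^*:=\max(\{\delta:f(\delta)=0\}\cup\operatorname{argmax}f)$. Run the (standard) Newton–Dinkelbach method described in the context. Then for every iteration $i\ge2$, $D_f(\delta^*,\delta^{(i)})\le D_f(\delta^*,\delta^{(i-1)})$, and equality holds if and only if $g^{(i-1)}=\inf_{g\in\partial f(\delta^{(i-1)})}g$ and $f(\delta^{(i)})=0$.
   Context: $\operatorname{dom}(f):=\{x:-\infty<f(x)<\infty\}$; $\partial f(x_0):=\{g: f(x)\le f(x_0)+g(x-x_0)\ \forall x\in\mathbb{R}\}$. Bregman divergence: $D_f(\delta',\delta):=f(\delta)+\sup_{g\in\partial f(\delta)}g(\delta'-\delta)-f(\delta')$ if $\delta\ne\delta'$, and $0$ if $\delta=\delta'$ (for $\delta,\delta'\in\operatorname{dom}(f)$, $\partial f(\delta)\ne\emptyset$). Newton–Dinkelbach method: input $\delta^{(1)}\in\operatorname{dom}(f)$, $g^{(1)}\in\partial f(\delta^{(1)})$ with $f(\delta^{(1)})\le0$, $g^{(1)}<0$. At iteration $i$: if $f(\delta^{(i)})=0$ return $\delta^{(i)}$; otherwise $\delta:=\delta^{(i)}-f(\delta^{(i)})/g^{(i)}$ and some $g\in\partial f(\delta)$ from an oracle; if $f(\delta)=-\infty$, or $f(\delta)<0$ and $g\ge0$,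 report no root; otherwise $\delta^{(i+1)}:=\delta$, $g^{(i+1)}:=g$. *)

theory Defs
  imports "HOL-Analysis.Analysis" "HOL-Library.Extended_Real"
begin

definition edom :: "(real \<Rightarrow> ereal) \<Rightarrow> real set" where
  "edom f = {x. -\<infinity> < f x \<and> f x < \<infinity>}"

definition proper_concave :: "(real \<Rightarrow> ereal) \<Rightarrow> bool" where
  "proper_concave f \<longleftrightarrow>
     (\<forall>x. f x \<noteq> \<infinity>) \<and> (\<exists>x. f x \<noteq> -\<infinity>) \<and>
     (\<forall>x y t. 0 < t \<and> t < 1 \<longrightarrow>
        ereal t * f x + ereal (1 - t) * f y \<le> f (t * x + (1 - t) * y))"

definition supdiff :: "(real \<Rightarrow> ereal) \<Rightarrow> real \<Rightarrow> real set" where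
  "supdiff f x0 = {g. \<forall>x. f x \<le> f x0 + ereal (g * (x - x0))}"

definition bregman :: "(real \<Rightarrow> ereal) \<Rightarrow> real \<Rightarrow> real \<Rightarrow> ereal" where
  "bregman f d' d =
     (if d = d' then 0
      else f d + (SUP g\<in>supdiff f d. ereal (g * (d' - d))) - f d')"

definition delta_star :: "(real \<Rightarrow> ereal) \<Rightarrow> real" where
  "delta_star f = (GREATEST x. f x = 0 \<or> (\<forall>y. f y \<le> f x))"

end

theory Submission
  imports Defs
begin

lemma pc_not_inf: "proper_concave f \<Longrightarrow> f x \<noteq> \<infinity>"
  unfolding proper_concave_def by auto

lemma pc_ineq:
  assumes "proper_concave f" "0 < l" "l < 1" "f x = ereal fx" "f y = ereal fy"
  shows "ereal (l*fx + (1-l)*fy) \<le> f (l*x + (1-l)*y)"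
proof -
  have "ereal l * f x + ereal (1 - l) * f y \<le> f (l*x + (1-l)*y)"
    using assms(1-3) unfolding proper_concave_def by blast
  then show ?thesis using assms(4,5) by simp
qed

lemma supdiffD: "g \<in> supdiff f x0 \<Longrightarrow> f x \<le> f x0 + ereal (g*(x-x0))"
  unfolding supdiff_def by blast

lemma sup_ge:
  fixes f :: "real \<Rightarrow> ereal" and P :: "real set"
  assumes conc: "proper_concave f" and ne: "P \<noteq> {}" and ub: "\<forall>y\<in>P. y \<le> b"
    and ba: "b < a" and fa: "f a = ereal fa" and lb: "\<forall>y\<in>P. ereal c \<le> f y"
  shows "ereal c \<le> f (Sup P)"
proof (rule ccontr)
  define t where "t = Sup P"
  assume "\<not> ereal c \<le> f (Sup P)" hence lt: "f t < ereal c" unfolding t_def by simp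
  have bdd: "bdd_above P" using ub by (auto simp: bdd_above_def)
  have tb: "t \<le> b" unfolding t_def using ne ub by (intro cSup_least) auto
  have tP: "t \<notin> P" using lt lb by force
  have key: "ereal (c - (t-y)/(a-y) * (c - fa)) \<le> f t" and yt: "y < t" if yP: "y \<in> P" for y
  proof -
    have "y \<le> t" unfolding t_def by (rule cSup_upper[OF yP bdd])
    with tP yP show yt: "y < t" by (cases "y = t") auto
    obtain fy where fy: "f y = ereal fy" using lb yP pc_not_inf[OF conc, of y]
      by (cases "f y") auto
    have cfy: "c \<le> fy" using lb yP fy by auto
    define l where "l = (a-t)/(a-y)"
    have ay: "a - y > 0" using yt tb ba by simp
    have l0: "0 < l" "l < 1" using yt tb ba ay by (auto simp: l_def field_simps)
    have la: "l*(a-y) = a-t" using ay by (simp add: l_def)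
    have teq: "l*y + (1-l)*a = t" using la by (simp add: algebra_simps)
    have 1: "ereal (l*fy + (1-l)*fa) \<le> f t" using pc_ineq[OF conc l0 fy fa] teq by simp
    have l1: "1 - l = (t-y)/(a-y)" using ay by (simp add: l_def field_simps)
    have "l*c + (1-l)*fa = c - (1-l)*(c-fa)" by (simp add: algebra_simps)
    hence 2: "c - (t-y)/(a-y) * (c - fa) = l*c + (1-l)*fa" using l1 by simp
    have 3: "l*c + (1-l)*fa \<le> l*fy + (1-l)*fa" using cfy l0 by simp
    show "ereal (c - (t-y)/(a-y) * (c - fa)) \<le> f t" using 1 2 3
      by (metis ereal_less_eq(3) order_trans)
  qed
  obtain y0 where y0: "y0 \<in> P" using ne by auto
  obtain ft where ft: "f t = ereal ft" using key[OF y0] pc_not_inf[OF conc, of t]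
    by (cases "f t") auto
  have ftc: "ft < c" using lt ft by simp
  have cfa: "fa < c"
  proof (rule ccontr)
    assume "\<not> fa < c"
    moreover have "(t-y0)/(a-y0) \<ge> 0" using yt[OF y0] tb ba by simp
    ultimately have "(t-y0)/(a-y0) * (c - fa) \<le> 0" by (intro mult_nonneg_nonpos) auto
    then show False using key[OF y0] ft ftc by simp
  qed
  define e where "e = (a-t)*(c-ft)/(c-fa)"
  have e0: "e > 0" using tb ba ftc cfa by (simp add: e_def)
  have "t - e < Sup P" using e0 by (simp add: t_def)
  then obtain y where yP: "y \<in> P" and ye: "t - e < y" using less_cSup_iff[OF ne bdd] by auto
  have yt': "y < t" using yt[OF yP] .
  have at: "a - t > 0" using tb ba by simp
  have "(t-y)/(a-y) \<le> (t-y)/(a-t)" using yt' at by (intro divide_left_mono) auto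
  also have "\<dots> < e/(a-t)" using ye at by (intro divide_strict_right_mono) auto
  also have "e/(a-t) = (c-ft)/(c-fa)" using at by (simp add: e_def)
  finally have "(t-y)/(a-y) * (c-fa) < c - ft" using cfa by (simp add: pos_less_divide_eq)
  then show False using key[OF yP] ft by simp
qed

lemma roots_closed:
  fixes f :: "real \<Rightarrow> ereal"
  assumes conc: "proper_concave f" and ne: "{x. f x = 0} \<noteq> {}"
    and ub: "\<forall>y\<in>{x. f x = 0}. y \<le> b"
    and ba: "b < a" and fa: "f a = ereal fa"
  shows "f (Sup {x. f x = 0}) = 0"
proof (rule ccontr)
  define R where "R = {x. f x = 0}"
  define t where "t = Sup R"
  have bdd: "bdd_above R" using ub by (auto simp: bdd_above_def R_def)
  have ge: "ereal 0 \<le> f t" unfolding t_def R_def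
    by (rule sup_ge[OF conc ne ub ba fa]) auto
  assume "f (Sup {x. f x = 0}) \<noteq> 0"
  hence ne0: "f t \<noteq> 0" by (simp add: t_def R_def)
  obtain ft where ft: "f t = ereal ft" using ge pc_not_inf[OF conc, of t] by (cases "f t") auto
  have ft0: "ft > 0" using ge ne0 ft by simp
  have tR: "t \<notin> R" using ne0 by (simp add: R_def)
  obtain y where yR: "y \<in> R" using ne by (auto simp: R_def)
  have "y \<le> t" unfolding t_def by (rule cSup_upper[OF yR bdd])
  with tR yR have yt: "y < t" by (cases "y = t") auto
  then obtain y1 where y1R: "y1 \<in> R" and yy1: "y < y1"
    using less_cSup_iff[of R y] yR bdd by (auto simp: t_def)
  have "y1 \<le> t" unfolding t_def by (rule cSup_upper[OF y1R bdd])
  with tR y1R have y1t: "y1 < t" by (cases "y1 = t") auto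
  define l where "l = (t-y1)/(t-y)"
  have l0: "0 < l" "l < 1" using yt y1t yy1 by (auto simp: l_def field_simps)
  have la: "l*(t-y) = t-y1" using yt by (simp add: l_def)
  have teq: "l*y + (1-l)*t = y1" using la by (simp add: algebra_simps)
  have fy: "f y = ereal 0" using yR by (simp add: R_def zero_ereal_def)
  have "ereal (l*0 + (1-l)*ft) \<le> f y1" using pc_ineq[OF conc l0 fy ft] teq by simp
  moreover have "f y1 = 0" using y1R by (simp add: R_def)
  moreover have "(1-l)*ft > 0" using l0 ft0 by simp
  ultimately show False by (simp add: zero_ereal_def)
qed

lemma argmax_closed:
  fixes f :: "real \<Rightarrow> ereal"
  assumes conc: "proper_concave f" and ne: "{x. \<forall>y. f y \<le> f x} \<noteq> {}"
    and ub: "\<forall>y\<in>{x. \<forall>y. f y \<le> f x}. y \<le> b"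
    and ba: "b < a" and fa: "f a = ereal fa"
  shows "\<forall>z. f z \<le> f (Sup {x. \<forall>y. f y \<le> f x})"
proof -
  obtain x0 where x0: "\<forall>y. f y \<le> f x0" using ne by auto
  obtain M where M: "f x0 = ereal M" using x0[rule_format, of a] fa pc_not_inf[OF conc, of x0]
    by (cases "f x0") auto
  have lb: "\<forall>y\<in>{x. \<forall>y. f y \<le> f x}. ereal M \<le> f y" using x0 M by (metis mem_Collect_eq)
  have "ereal M \<le> f (Sup {x. \<forall>y. f y \<le> f x})" by (rule sup_ge[OF conc ne ub ba fa lb])
  then show ?thesis using x0 M by (metis order_trans)
qed

theorem lemma3p3:
  fixes f :: "real \<Rightarrow> ereal" and d g :: "nat \<Rightarrow> real" and i :: nat
  assumes conc: "proper_concave f"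
    and ex_start: "\<exists>x\<in>edom f. f x \<le> 0 \<and> supdiff f x \<inter> {..<0} \<noteq> {}"
    and root_or_max: "(\<exists>x. f x = 0) \<or> (\<exists>x. \<forall>y. f y \<le> f x)"
    and init: "d 1 \<in> edom f" "g 1 \<in> supdiff f (d 1)" "f (d 1) \<le> 0" "g 1 < 0"
    and run: "\<forall>j. 1 \<le> j \<and> j < i \<longrightarrow>
                 f (d j) \<noteq> 0 \<and>
                 d (Suc j) = d j - real_of_ereal (f (d j)) / g j \<and>
                 g (Suc j) \<in> supdiff f (d (Suc j)) \<and>
                 f (d (Suc j)) \<noteq> -\<infinity> \<and>
                 \<not> (f (d (Suc j)) < 0 \<and> g (Suc j) \<ge> 0)"
    and i2: "2 \<le> i"
  shows "bregman f (delta_star f) (d i) \<le> bregman f (delta_star f) (d (i - 1)) \<and>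
         (bregman f (delta_star f) (d i) = bregman f (delta_star f) (d (i - 1)) \<longleftrightarrow>
            ereal (g (i - 1)) = (INF h\<in>supdiff f (d (i - 1)). ereal h) \<and> f (d i) = 0)"
proof -
  have inv: "f (d j) \<noteq> -\<infinity> \<and> f (d j) \<le> 0 \<and> g j \<in> supdiff f (d j) \<and> (f (d j) < 0 \<longrightarrow> g j < 0)"
    if "1 \<le> j" "j \<le> i" for j
    using that
  proof (induction j)
    case 0 thus ?case by simp
  next
    case (Suc k)
    show ?case
    proof (cases "k = 0")
      case True thus ?thesis using init by (auto simp: edom_def)
    next
      case False
      hence k1: "1 \<le> k" by simp
      have IH: "f (d k) \<noteq> -\<infinity> \<and> f (d k) \<le> 0 \<and> g k \<in> supdiff f (d k) \<and> (f (d k) < 0 \<longrightarrow> g k < 0)"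
        using Suc.IH k1 Suc.prems by simp
      have rk: "f (d k) \<noteq> 0 \<and>
                 d (Suc k) = d k - real_of_ereal (f (d k)) / g k \<and>
                 g (Suc k) \<in> supdiff f (d (Suc k)) \<and>
                 f (d (Suc k)) \<noteq> -\<infinity> \<and>
                 \<not> (f (d (Suc k)) < 0 \<and> g (Suc k) \<ge> 0)"
        using run k1 Suc.prems Suc_le_lessD by blast
      obtain fk where fk: "f (d k) = ereal fk" using IH pc_not_inf[OF conc, of "d k"]
        by (cases "f (d k)") auto
      have fk0: "fk < 0" using IH rk fk by (simp add: zero_ereal_def)
      have gk0: "g k < 0" using IH fk fk0 by simp
      have "f (d (Suc k)) \<le> ereal fk + ereal (g k * (d (Suc k) - d k))"
        using supdiffD[of "g k" f "d k" "d (Suc k)"] IH fk by simp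
      also have "d (Suc k) - d k = - fk / g k" using rk fk by simp
      also have "ereal fk + ereal (g k * (- fk / g k)) = 0" using gk0 by simp
      finally have "f (d (Suc k)) \<le> 0" .
      then show ?thesis using rk by auto
    qed
  qed
  define k where "k = i - 1"
  have ik: "i = Suc k" and k1: "1 \<le> k" using i2 by (simp_all add: k_def)
  have km: "i - 1 = k" using ik by simp
  define a where "a = d k"
  define b where "b = d i"
  define ga where "ga = g k"
  define gb where "gb = g i"
  have Ia: "f a \<noteq> -\<infinity> \<and> f a \<le> 0 \<and> ga \<in> supdiff f a \<and> (f a < 0 \<longrightarrow> ga < 0)"
    using inv[of k] k1 ik by (simp add: a_def ga_def)
  have Ib: "f b \<noteq> -\<infinity> \<and> f b \<le> 0 \<and> gb \<in> supdiff f b \<and> (f b < 0 \<longrightarrow> gb < 0)"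
    using inv[of i] i2 by (simp add: b_def gb_def)
  have rk: "f a \<noteq> 0" "b = a - real_of_ereal (f a) / ga"
    using run[rule_format, of k] k1 ik by (auto simp: a_def b_def ga_def)
  obtain fa where fa: "f a = ereal fa" using Ia pc_not_inf[OF conc, of a] by (cases "f a") auto
  obtain fb where fb: "f b = ereal fb" using Ib pc_not_inf[OF conc, of b] by (cases "f b") auto
  have fa0: "fa < 0" using Ia rk fa by (simp add: zero_ereal_def)
  have ga0: "ga < 0" using Ia fa fa0 by simp
  have fb0: "fb \<le> 0" using Ib fb by simp
  have beq: "b = a - fa / ga" using rk fa by simp
  have tang: "fa + ga * (b - a) = 0" using beq ga0 by simp
  have ba: "b < a" using beq fa0 ga0 by (simp add: divide_neg_neg)
  have gaS: "ga \<in> supdiff f a" and gbS: "gb \<in> supdiff f b" using Ia Ib by auto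
  have bound: "f x < f b \<and> f x < 0" if xb: "b < x" for x
  proof (cases "fb = 0")
    case True
    have "f x \<le> ereal (fa + ga * (x - a))" using supdiffD[OF gaS, of x] fa by simp
    also have "fa + ga * (x - a) = ga * (x - b)" using tang by (simp add: algebra_simps)
    finally have "f x \<le> ereal (ga * (x - b))" .
    moreover have "ereal (ga * (x - b)) < 0" using ga0 xb by (simp add: mult_neg_pos)
    ultimately have "f x < 0" by (rule le_less_trans)
    moreover have "f b = 0" using True fb by simp
    ultimately show ?thesis by simp
  next
    case False
    hence gb0: "gb < 0" using Ib fb fb0 by simp
    have "f x \<le> ereal fb + ereal (gb * (x - b))" using supdiffD[OF gbS, of x] fb by simp
    hence "f x \<le> ereal (fb + gb * (x - b))" by simp
    moreover have "ereal (fb + gb * (x - b)) < ereal fb" using gb0 xb by (simp add: mult_neg_pos)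
    ultimately have "f x < ereal fb" by (rule le_less_trans)
    moreover have "ereal fb \<le> 0" using fb0 by simp
    ultimately have "f x < 0" by (rule less_le_trans)
    with \<open>f x < ereal fb\<close> show ?thesis using fb by simp
  qed
  define P where "P = (\<lambda>x. f x = 0 \<or> (\<forall>y. f y \<le> f x))"
  have Pb: "x \<le> b" if "P x" for x
  proof (rule ccontr)
    assume "\<not> x \<le> b"
    hence "f x < f b \<and> f x < 0" using bound by simp
    hence h1: "f x < f b" and h2: "f x < 0" by auto
    from that have "f x = 0 \<or> f b \<le> f x" unfolding P_def by blast
    then show False using h1 h2 by auto
  qed
  have exs: "\<exists>s. P s \<and> (\<forall>y. P y \<longrightarrow> y \<le> s)"
  proof -
    define R where "R = {x. f x = 0}"
    define A where "A = {x. \<forall>y. f y \<le> f x}"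
    have ubR: "\<forall>y\<in>R. y \<le> b" using Pb by (auto simp: R_def P_def)
    have ubA: "\<forall>y\<in>A. y \<le> b" using Pb by (auto simp: A_def P_def)
    have bddR: "bdd_above R" using ubR by (auto simp: bdd_above_def)
    have bddA: "bdd_above A" using ubA by (auto simp: bdd_above_def)
    have RS: "Sup R \<in> R" if "R \<noteq> {}"
      using roots_closed[OF conc that[unfolded R_def] ubR[unfolded R_def] ba fa] by (simp add: R_def)
    have AS: "Sup A \<in> A" if "A \<noteq> {}"
      using argmax_closed[OF conc that[unfolded A_def] ubA[unfolded A_def] ba fa] by (simp add: A_def)
    have PRA: "P x \<longleftrightarrow> x \<in> R \<or> x \<in> A" for x by (simp add: P_def R_def A_def)
    have RA: "R \<noteq> {} \<or> A \<noteq> {}" using root_or_max by (auto simp: R_def A_def)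
    show ?thesis
    proof (cases "R = {}")
      case True
      then have "A \<noteq> {}" using RA by simp
      show ?thesis
      proof (rule exI[of _ "Sup A"], intro conjI allI impI)
        show "P (Sup A)" using AS[OF \<open>A \<noteq> {}\<close>] PRA by simp
        fix y assume "P y"
        hence "y \<in> A" using PRA True by simp
        then show "y \<le> Sup A" using bddA by (rule cSup_upper)
      qed
    next
      case Rne: False
      show ?thesis
      proof (cases "A = {}")
        case True
        show ?thesis
        proof (rule exI[of _ "Sup R"], intro conjI allI impI)
          show "P (Sup R)" using RS[OF Rne] PRA by simp
          fix y assume "P y"
          hence "y \<in> R" using PRA True by simp
          then show "y \<le> Sup R" using bddR by (rule cSup_upper)
        qed
      next
        case False
        show ?thesis
        proof (rule exI[of _ "max (Sup R) (Sup A)"], intro conjI allI impI)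
          show "P (max (Sup R) (Sup A))" using RS[OF Rne] AS[OF False] PRA
            by (cases "Sup R \<le> Sup A") (auto simp: max_def)
          fix y assume "P y"
          hence "y \<in> R \<or> y \<in> A" using PRA by simp
          then show "y \<le> max (Sup R) (Sup A)"
          proof
            assume "y \<in> R" hence "y \<le> Sup R" using bddR by (rule cSup_upper)
            then show ?thesis by simp
          next
            assume "y \<in> A" hence "y \<le> Sup A" using bddA by (rule cSup_upper)
            then show ?thesis by simp
          qed
        qed
      qed
    qed
  qed
  then obtain s where Ps: "P s" and sgr: "\<And>y. P y \<Longrightarrow> y \<le> s" by blast
  have ds: "delta_star f = s" unfolding delta_star_def P_def[symmetric]
    by (rule Greatest_equality) (use Ps sgr in auto)
  have sb: "s \<le> b" using Pb Ps by simp
  have fb0s: "fb = 0 \<Longrightarrow> s = b" using sgr[of b] sb fb by (simp add: P_def zero_ereal_def)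
  obtain fs where fs: "f s = ereal fs"
  proof -
    have "f s \<noteq> -\<infinity>"
    proof (cases "f s = 0")
      case False
      hence "f b \<le> f s" using Ps by (auto simp: P_def)
      then show ?thesis using fb by auto
    qed simp
    then show ?thesis using that pc_not_inf[OF conc, of s] by (cases "f s") auto
  qed
  have sa: "a \<noteq> s" using sb ba by simp
  have dk: "d (i - 1) = a" by (simp only: km a_def)
  define Ua where "Ua = (SUP h\<in>supdiff f a. ereal (h * (s - a)))"
  have Da: "bregman f (delta_star f) (d (i - 1)) = f a + Ua - f s"
    unfolding dk bregman_def ds using sa by (simp add: Ua_def)
  have Db: "bregman f (delta_star f) (d i) = (if b = s then 0 else f b + (SUP h\<in>supdiff f b. ereal (h * (s - b))) - f s)"
    by (simp add: bregman_def ds b_def)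
  have Ua_ge: "ereal (ga * (s - a)) \<le> Ua" unfolding Ua_def using gaS by (rule SUP_upper)
  have mono: "g' \<le> h" if "g' \<in> supdiff f a" "h \<in> supdiff f b" for g' h
  proof -
    have "f a \<le> f b + ereal (h*(a-b))" using supdiffD[OF that(2)] .
    hence 1: "fa \<le> fb + h*(a-b)" using fa fb by simp
    have "f b \<le> f a + ereal (g'*(b-a))" using supdiffD[OF that(1)] .
    hence 2: "fb \<le> fa + g'*(b-a)" using fa fb by simp
    have "0 \<le> (h - g')*(a-b)" using 1 2 by (simp add: algebra_simps)
    then show ?thesis using ba by (simp add: zero_le_mult_iff)
  qed
  show ?thesis
  proof (cases "s = b")
    case False
    hence sb': "s < b" using sb by simp
    have fbn: "fb < 0" using fb0 fb0s False by force
    define Ub where "Ub = (SUP h\<in>supdiff f b. ereal (h * (s - b)))"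
    have Ub_le: "Ub \<le> ereal (ga * (s - b))" unfolding Ub_def
    proof (rule SUP_least)
      fix h assume "h \<in> supdiff f b"
      hence "ga \<le> h" using mono gaS by simp
      then show "ereal (h * (s - b)) \<le> ereal (ga * (s - b))" using sb' by (simp add: mult_right_mono_neg)
    qed
    have Ub_ge: "ereal (gb * (s - b)) \<le> Ub" unfolding Ub_def using gbS by (rule SUP_upper)
    obtain ub where ub: "Ub = ereal ub" using Ub_le Ub_ge by (cases Ub) auto
    have ubl: "ub \<le> ga * (s - b)" using Ub_le ub by simp
    have eq2: "fa + ga * (s - a) = ga * (s - b)" using tang by (simp add: algebra_simps)
    have lt: "f b + Ub - f s < f a + Ua - f s"
    proof (cases Ua)
      case (real ua)
      have "ua \<ge> ga * (s - a)" using Ua_ge real by simp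
      then have "fb + ub - fs < fa + ua - fs" using fbn ubl eq2 by linarith
      then show ?thesis using real fa fb fs ub by simp
    next
      case PInf
      then show ?thesis using fa fb fs ub by simp
    next
      case MInf
      then show ?thesis using Ua_ge by simp
    qed
    have E1: "bregman f (delta_star f) (d i) = f b + Ub - f s" using Db False by (simp add: Ub_def)
    have fdi: "f (d i) \<noteq> 0" using fbn fb by (simp add: b_def[symmetric])
    have XY: "bregman f (delta_star f) (d i) < bregman f (delta_star f) (d (i - 1))"
      unfolding E1 Da by (rule lt)
    show ?thesis using XY fdi by (simp add: less_imp_le less_imp_neq)
  next
    case True
    have Db0: "bregman f (delta_star f) (d i) = 0" using Db True by simp
    have leastiff: "(\<forall>h\<in>supdiff f a. ga \<le> h) \<longleftrightarrow> Ua = ereal (ga * (s - a))"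
    proof
      assume H: "\<forall>h\<in>supdiff f a. ga \<le> h"
      show "Ua = ereal (ga * (s - a))"
      proof (rule antisym[OF _ Ua_ge])
        show "Ua \<le> ereal (ga * (s - a))" unfolding Ua_def
        proof (rule SUP_least)
          fix h assume "h \<in> supdiff f a"
          hence "ga \<le> h" using H by simp
          then show "ereal (h * (s - a)) \<le> ereal (ga * (s - a))" using sa sb ba by (simp add: mult_right_mono_neg)
        qed
      qed
    next
      assume H: "Ua = ereal (ga * (s - a))"
      show "\<forall>h\<in>supdiff f a. ga \<le> h"
      proof
        fix h assume hS: "h \<in> supdiff f a"
        have "ereal (h * (s - a)) \<le> Ua" unfolding Ua_def using hS by (rule SUP_upper)
        hence "h * (s - a) \<le> ga * (s - a)" using H by simp
        then show "ga \<le> h" using sb ba by (simp add: mult_le_cancel_right)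
      qed
    qed
    have infiff: "(\<forall>h\<in>supdiff f a. ga \<le> h) \<longleftrightarrow> ereal ga = (INF h\<in>supdiff f a. ereal h)"
    proof
      assume H: "\<forall>h\<in>supdiff f a. ga \<le> h"
      show "ereal ga = (INF h\<in>supdiff f a. ereal h)"
      proof (rule antisym)
        show "ereal ga \<le> (INF h\<in>supdiff f a. ereal h)" using H by (auto intro: INF_greatest)
        show "(INF h\<in>supdiff f a. ereal h) \<le> ereal ga" using gaS by (rule INF_lower)
      qed
    next
      assume H: "ereal ga = (INF h\<in>supdiff f a. ereal h)"
      show "\<forall>h\<in>supdiff f a. ga \<le> h"
      proof
        fix h assume hS: "h \<in> supdiff f a"
        have "(INF h\<in>supdiff f a. ereal h) \<le> ereal h" using hS by (rule INF_lower)
        then have "ereal ga \<le> ereal h" using H by simp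
        then show "ga \<le> h" by simp
      qed
    qed
    have eq2: "fa + ga * (s - a) = 0" using tang True by simp
    have main: "0 \<le> f a + Ua - f s \<and> (f a + Ua - f s = 0 \<longleftrightarrow> Ua = ereal (ga * (s - a)) \<and> fb = 0)"
    proof (cases Ua)
      case (real ua)
      have "ua \<ge> ga * (s - a)" using Ua_ge real by simp
      moreover have "fs = fb" using True fs fb by simp
      ultimately show ?thesis using real fa fs eq2 fb0 by (auto simp: zero_ereal_def)
    next
      case PInf
      then show ?thesis using fa fs by simp
    next
      case MInf
      then show ?thesis using Ua_ge by simp
    qed
    have gk: "g (i - 1) = ga" by (simp only: km ga_def)
    have fdi: "f (d i) = 0 \<longleftrightarrow> fb = 0" using fb by (simp add: b_def[symmetric] zero_ereal_def)
    show ?thesis unfolding Db0 Da gk fdi unfolding dk using main leastiff infiff by auto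
  qed
qed

end
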